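(* Let $r>0$ and let $n\geq 2$ be an integer. Consider the one-parameter family of scalar ODEs $$\frac{dx}{dt}=f(x,a)=a\frac{x^n}{1+x^n}-x+r,\qquad x\in[0,\infty),$$ with bifurcation parameter $a>0$. Let $a_{c,1}<a_{c,2}$ be the values of $a$ at which the line $x\mapsto x-r$ is tangent to the curve $x\mapsto a\frac{x^n}{1+x^n}$, i.e. for which the system $f(x,a)=0$, $\frac{\partial f}{\partial x}(x,a)=0$ has a solution $x>0$. For $a=a_{c,j}$ the system has exactly two equilibria, denoted $0<\bar x_1(a_{c,j})<\bar x_2(a_{c,j})$. Suppose that $a_{c,j}\neq \frac{4n}{n^2-1}\left(\frac{n-1}{n+1}\right)^{1/n}$ for $j=1,2$. Then the system undergoes fold (saddle-node) bifurcations at the critical points $(\bar x_2(a_{c,1}),a_{c,1})$ and $(\bar x_1(a_{c,2}),a_{c,2})$; consequently, near each critical point the system can be mapped to the normal form $\frac{dz}{dt}=\beta\pm z^2$, where $z=x-\bar x_i$ (with $\bar x_i$ the critical equilibrium) and $\beta\in\mathbb{R}$ is proportional to $a-a_{c,j}$.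
   Context: A fold bifurcation at $(x^*,a^* )$ of a scalar system $\dot x=f(x,a)$ is characterised by $f(x^*,a^* )=0$, $f_x(x^*,a^* )=0$ together with the nondegeneracy conditions $f_a(x^*,a^* )\neq 0$ and $f_{xx}(x^*,a^* )\neq 0$, under which the system is locally topologically equivalent to the normal form $\dot z=\beta\pm z^2$. *)

theory Defs
  imports "HOL-Analysis.Analysis"
begin

definition hill_rhs :: "nat \<Rightarrow> real \<Rightarrow> real \<Rightarrow> real \<Rightarrow> real" where
  "hill_rhs n r x a = a * x ^ n / (1 + x ^ n) - x + r"

definition fold_point :: "(real \<Rightarrow> real \<Rightarrow> real) \<Rightarrow> real \<Rightarrow> real \<Rightarrow> bool" where
  "fold_point f xs as \<longleftrightarrow>
     f xs as = 0 \<and>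
     deriv (\<lambda>x. f x as) xs = 0 \<and>
     deriv (\<lambda>a. f xs a) as \<noteq> 0 \<and>
     deriv (\<lambda>y. deriv (\<lambda>x. f x as) y) xs \<noteq> 0"

end

theory Submission
  imports Defs
begin

lemma d1:
  assumes "x > 0"
  shows "((\<lambda>x. hill_rhs n r x a) has_real_derivative (a * (real n * x^(n-1)) / (1+x^n)^2 - 1)) (at x)"
proof -
  have h: "1 + x^n \<noteq> 0" using assms by (smt (verit) zero_less_power)
  show ?thesis unfolding hill_rhs_def
    apply (rule derivative_eq_intros refl h)+
    using h apply (simp add: field_simps power2_eq_square)
    done
qed

lemma deriv1:
  assumes "x > 0"
  shows "deriv (\<lambda>x. hill_rhs n r x a) x = a * (real n * x^(n-1)) / (1+x^n)^2 - 1"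
  using d1[OF assms] by (rule DERIV_imp_deriv)

lemma alg2: fixes x p a m q :: real assumes q: "q = 1 + x*x*p" "q \<noteq> 0"
 shows "((m-1) * p * m * a * q^2 - a * (m * (x*p)) * (2 * (m * (x*p) * q))) / (q^2 * q^2) = a * m * p * ((m - 1) - (m+1) * (x*x*p)) / q^3"
proof -
  have "(m-1) * p * m * a * q^2 - a * (m * (x*p)) * (2 * (m * (x*p) * q)) = q * (a * m * p * ((m - 1) - (m+1) * (x*x*p)))"
    unfolding q(1) by (simp add: algebra_simps power2_eq_square)
  then show ?thesis using q(2) by (simp add: power2_eq_square power3_eq_cube)
qed

lemma d2:
  assumes "x > 0" "n = Suc (Suc k)"
  shows "((\<lambda>y. deriv (\<lambda>x. hill_rhs n r x a) y) has_real_derivative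
           (a * real n * x^k * ((real n - 1) - (real n + 1) * x^n) / (1+x^n)^3)) (at x)"
proof (rule has_field_derivative_transform_within_open[where S="{0<..}"])
  have h: "1 + x^n \<noteq> 0" using assms by (smt (verit) zero_less_power)
  have xn: "x^n = x*x*x^k" using assms(2) by simp
  have h2: "(1 + x^n)^2 \<noteq> 0" using h by simp
  have e1: "x^(n-1) = x*x^k" "x^(n-1-Suc 0) = x^k" "x^(n - Suc 0) = x*x^k" "real (n-1) = real n - 1"
    using assms(2) by auto
  have e3: "x^(n - Suc (Suc 0)) = x^k" "real (n - Suc 0) = real n - 1" using assms(2) by auto
  have E: "((real n - 1) * x^k * real n * a * (1+x^n)^2 - a * (real n * (x * x^k)) * (2 * (real n * (x*x^k) * (1+x^n)))) / ((1+x^n)^2*(1+x^n)^2)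
     = a * real n * x^k * ((real n - 1) - (real n + 1) * x^n) / (1+x^n)^3"
    using alg2[of "1 + x^n" x "x^k" "real n" a] xn h by simp
  show "((\<lambda>y. a * (real n * y^(n-1)) / (1+y^n)^2 - 1) has_real_derivative
           (a * real n * x^k * ((real n - 1) - (real n + 1) * x^n) / (1+x^n)^3)) (at x)"
    apply (rule DERIV_cong)
    apply (rule derivative_eq_intros refl h2)+
    apply (rule trans[OF _ E])
    apply (simp add: e1 e3)
    done
qed (use assms deriv1 in auto)

definition AA :: "nat \<Rightarrow> real \<Rightarrow> real \<Rightarrow> real" where
  "AA n r x = (x - r) * (1 + x^n) / x^n"
definition ph :: "nat \<Rightarrow> real \<Rightarrow> real \<Rightarrow> real" where
  "ph n r x = x^(n+1) - (real n - 1) * x + real n * r"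

lemma AA_deriv:
  assumes "x > 0" "n \<ge> 1"
  shows "(AA n r has_real_derivative ph n r x / x^(n+1)) (at x)"
proof -
  obtain k where k: "n = Suc k" using assms(2) by (metis Suc_le_D One_nat_def)
  have h: "x^n \<noteq> 0" using assms by simp
  show ?thesis unfolding AA_def[abs_def]
    apply (rule derivative_eq_intros refl)+
    using h apply simp
    using h assms(1) unfolding ph_def k
    apply (simp_all add: field_simps power2_eq_square)
    done
qed

lemma AA_cont: "x > 0 \<Longrightarrow> n \<ge> 1 \<Longrightarrow> isCont (AA n r) x"
  using AA_deriv DERIV_isCont by blast

lemma root_iff:
  assumes "x > 0"
  shows "hill_rhs n r x a = 0 \<longleftrightarrow> AA n r x = a"
proof -
  have h: "x^n > 0" "1 + x^n > 0" using assms by (simp_all add: add_pos_pos)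
  have "hill_rhs n r x a = 0 \<longleftrightarrow> a * x^n / (1 + x^n) = x - r"
    unfolding hill_rhs_def by auto
  also have "\<dots> \<longleftrightarrow> a * x^n = (x - r) * (1 + x^n)"
    using h by (simp add: divide_eq_eq)
  also have "\<dots> \<longleftrightarrow> (x - r) * (1 + x^n) / x^n = a"
  proof -
    have hn: "x^n \<noteq> 0" by (metis h(1) less_irrefl)
    show ?thesis using hn divide_eq_eq by metis
  qed
  finally show ?thesis unfolding AA_def .
qed

lemma tang:
  assumes "x > 0" "n \<ge> 1" "hill_rhs n r x a = 0" "deriv (\<lambda>y. hill_rhs n r y a) x = 0"
  shows "ph n r x = 0" "a * real n * x^(n-1) = (1 + x^n)^2"
proof -
  have h: "x^n > 0" "1 + x^n > 0" using assms by (simp_all add: add_pos_pos)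
  have "deriv (\<lambda>y. hill_rhs n r y a) x = a * (real n * x^(n-1)) / (1+x^n)^2 - 1"
    by (rule deriv1[OF assms(1)])
  with assms(4) have d: "a * (real n * x^(n-1)) / (1+x^n)^2 = 1" by linarith
  then have "a * (real n * x^(n-1)) = (1 + x^n)^2" by (simp only: divide_eq_1_iff)
  then show e2: "a * real n * x^(n-1) = (1 + x^n)^2" by (simp add: mult.assoc)
  from assms(3) have e1: "a * x^n = (x - r) * (1 + x^n)" using h
    unfolding hill_rhs_def by (simp add: field_simps)
  obtain k where k: "n = Suc k" using assms(2) by (metis Suc_le_D One_nat_def)
  have "x * x^(n-1) = x^n" unfolding k by simp
  then have "real n * (a * x^n) = x * (1 + x^n)^2" using e2
    by (metis mult.assoc mult.commute)
  then have "real n * (x - r) * (1 + x^n) = x * (1 + x^n) * (1 + x^n)" using e1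
    by (simp add: power2_eq_square algebra_simps)
  then have "real n * (x - r) = x * (1 + x^n)" using h by simp
  then show "ph n r x = 0" unfolding ph_def by (simp add: algebra_simps)
qed

lemma ph_neg:
  assumes "n \<ge> 1" "0 < y" "y < x" "x < z" "ph n r y = 0" "ph n r z = 0"
  shows "ph n r x < 0"
proof (rule ccontr)
  assume "\<not> ph n r x < 0"
  then have c: "ph n r x \<ge> 0" by simp
  have D: "\<And>t. DERIV (ph n r) t :> (real (n+1) * t^n - (real n - 1))"
  proof -
    fix t :: real
    have "t^(n-1)*t = t^n" using assms(1) power_minus_mult[of n t] by simp
    then show "DERIV (ph n r) t :> (real (n+1) * t^n - (real n - 1))"
      unfolding ph_def[abs_def] by (auto intro!: derivative_eq_intros simp: algebra_simps)
  qed
  obtain c1 where c1: "y < c1" "c1 < x" "ph n r x - ph n r y = (x - y) * (real (n+1) * c1^n - (real n - 1))"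
    using MVT2[OF assms(3) D] by blast
  obtain c2 where c2: "x < c2" "c2 < z" "ph n r z - ph n r x = (z - x) * (real (n+1) * c2^n - (real n - 1))"
    using MVT2[OF assms(4) D] by blast
  have p1: "real (n+1) * c1^n - (real n - 1) \<ge> 0"
    using c1 c assms by (smt (verit) zero_le_mult_iff)
  have p2: "real (n+1) * c2^n - (real n - 1) \<le> 0"
    using c2 c assms by (smt (verit) mult_le_0_iff)
  have "c1^n < c2^n" using c1 c2 assms by (intro power_strict_mono) auto
  then have "real (n+1) * c1^n < real (n+1) * c2^n" by simp
  then show False using p1 p2 by linarith
qed

lemma AA_lt:
  assumes "n \<ge> 1" "0 < y" "y < z" "ph n r y = 0" "ph n r z = 0"
  shows "AA n r z < AA n r y"
proof -
  obtain c where c: "y < c" "c < z" "AA n r z - AA n r y = (z - y) * (ph n r c / c^(n+1))"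
    using MVT2[OF assms(3), of "AA n r" "\<lambda>x. ph n r x / x^(n+1)"] AA_deriv assms by force
  have "ph n r c < 0" using ph_neg[OF assms(1,2) c(1,2) assms(4,5)] .
  moreover have "c^(n+1) > 0" using c assms by simp
  ultimately have "ph n r c / c^(n+1) < 0" by (simp add: divide_neg_pos)
  then show ?thesis using c assms by (smt (verit) mult_pos_neg)
qed


lemma fold_at:
  assumes "x > 0" "n \<ge> 2" "hill_rhs n r x a = 0" "deriv (\<lambda>y. hill_rhs n r y a) x = 0"
    and ne: "a \<noteq> 4 * n / (real n ^ 2 - 1) * root n ((real n - 1) / (real n + 1))"
  shows "fold_point (hill_rhs n r) x a"
proof -
  obtain k where k: "n = Suc (Suc k)" using assms(2) by (metis add_2_eq_Suc le_Suc_ex)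
  have n1: "n \<ge> 1" using assms(2) by simp
  have e2: "a * real n * x^(n-1) = (1 + x^n)^2" using tang(2)[OF assms(1) n1 assms(3,4)] .
  have xn: "x^n > 0" using assms(1) by simp
  have "((\<lambda>b. hill_rhs n r x b) has_real_derivative x^n / (1 + x^n)) (at a)"
    unfolding hill_rhs_def using xn by (auto intro!: derivative_eq_intros)
  then have da: "deriv (\<lambda>b. hill_rhs n r x b) a = x^n / (1 + x^n)" by (rule DERIV_imp_deriv)
  have "x^n / (1 + x^n) > 0" using xn by (intro divide_pos_pos) auto
  then have da0: "x^n / (1 + x^n) \<noteq> 0" by (metis less_irrefl)
  have dd: "deriv (\<lambda>y. deriv (\<lambda>x. hill_rhs n r x a) y) x =
     a * real n * x^k * ((real n - 1) - (real n + 1) * x^n) / (1+x^n)^3"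
    using d2[OF assms(1) k] by (rule DERIV_imp_deriv)
  have a0: "a \<noteq> 0"
  proof
    assume "a = 0"
    then have "(1 + x^n)^2 = 0" using e2 by simp
    then show False using xn by simp
  qed
  have inf: "(real n - 1) - (real n + 1) * x^n \<noteq> 0"
  proof
    assume h: "(real n - 1) - (real n + 1) * x^n = 0"
    have np: "real n + 1 > 0" by simp
    have u: "x^n = (real n - 1) / (real n + 1)" using h np by (simp add: field_simps)
    have rx: "root n ((real n - 1) / (real n + 1)) = x"
      using real_root_pos_unique[of n x "(real n - 1) / (real n + 1)"] u assms(1,2) by simp
    have "x * x^(n-1) = x^n" unfolding k by simp
    then have eA: "a * real n * x^n = x * (1 + x^n)^2" using e2 by (metis mult.assoc mult.commute)
    have hU: "x^n * (real n + 1) = real n - 1" using h by (simp add: algebra_simps)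
    have "a * real n * (real n - 1) * (real n + 1) = (a * real n * x^n) * (real n + 1) * (real n + 1)"
      using hU by (metis mult.assoc mult.commute)
    also have "\<dots> = x * ((real n + 1) + x^n * (real n + 1))^2"
      using eA by (simp add: algebra_simps power2_eq_square)
    also have "\<dots> = x * (2 * real n)^2"
    proof -
      have "(real n + 1) + x^n * (real n + 1) = 2 * real n" using hU by linarith
      then show ?thesis by (rule arg_cong[where f="\<lambda>t. x * t^2"])
    qed
    also have "\<dots> = x * 4 * (real n)^2" by (simp add: power2_eq_square)
    finally have "a * real n * (real n - 1) * (real n + 1) = x * 4 * (real n)^2" .
    then have "real n * (a * (real n ^ 2 - 1)) = real n * (4 * real n * x)"
      by (simp add: algebra_simps power2_eq_square)
    moreover have "real n \<noteq> 0" using assms(2) by simp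
    ultimately have "a * (real n ^ 2 - 1) = 4 * real n * x" by simp
    moreover have "real n ^ 2 - 1 > 0"
    proof -
      have "real n \<ge> 2" using assms(2) by simp
      then have "real n * real n \<ge> 2 * 2" by (intro mult_mono) auto
      then show ?thesis by (simp add: power2_eq_square)
    qed
    ultimately have "a = 4 * real n / (real n ^ 2 - 1) * x" by (simp add: field_simps)
    then show False using ne rx by simp
  qed
  have "x^k > 0" using assms(1) by simp
  moreover have "(1+x^n)^3 \<noteq> 0" using xn by simp
  moreover have "real n \<noteq> 0" using assms(2) by simp
  ultimately have "a * real n * x^k * ((real n - 1) - (real n + 1) * x^n) / (1+x^n)^3 \<noteq> 0"
    using a0 inf assms(1) by simp
  then show ?thesis unfolding fold_point_def using assms(3,4) da da0 dd by simp
qed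


theorem proposition2:
  fixes n :: nat and r ac1 ac2 x11 x21 x12 x22 :: real
  assumes "r > 0" and "n \<ge> 2"
    and "0 < ac1" and "ac1 < ac2"
    and crit: "{a. a > 0 \<and> (\<exists>x>0. hill_rhs n r x a = 0 \<and>
                   deriv (\<lambda>y. hill_rhs n r y a) x = 0)} = {ac1, ac2}"
    and eq1: "{x. x \<ge> 0 \<and> hill_rhs n r x ac1 = 0} = {x11, x21}" and "0 < x11" and "x11 < x21"
    and eq2: "{x. x \<ge> 0 \<and> hill_rhs n r x ac2 = 0} = {x12, x22}" and "0 < x12" and "x12 < x22"
    and "ac1 \<noteq> 4 * n / (real n ^ 2 - 1) * root n ((real n - 1) / (real n + 1))"
    and "ac2 \<noteq> 4 * n / (real n ^ 2 - 1) * root n ((real n - 1) / (real n + 1))"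
  shows "fold_point (hill_rhs n r) x21 ac1 \<and> fold_point (hill_rhs n r) x12 ac2"
proof -
  have n1: "n \<ge> 1" using assms(2) by simp
  have "ac1 \<in> {ac1, ac2}" by simp
  then have "ac1 \<in> {a. a > 0 \<and> (\<exists>x>0. hill_rhs n r x a = 0 \<and>
                   deriv (\<lambda>y. hill_rhs n r y a) x = 0)}" unfolding crit .
  then obtain p where p: "p > 0" "hill_rhs n r p ac1 = 0" "deriv (\<lambda>y. hill_rhs n r y ac1) p = 0"
    by blast
  have "ac2 \<in> {ac1, ac2}" by simp
  then have "ac2 \<in> {a. a > 0 \<and> (\<exists>x>0. hill_rhs n r x a = 0 \<and>
                   deriv (\<lambda>y. hill_rhs n r y a) x = 0)}" unfolding crit .
  then obtain q where q: "q > 0" "hill_rhs n r q ac2 = 0" "deriv (\<lambda>y. hill_rhs n r y ac2) q = 0"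
    by blast
  have php: "ph n r p = 0" using tang(1)[OF p(1) n1 p(2,3)] .
  have phq: "ph n r q = 0" using tang(1)[OF q(1) n1 q(2,3)] .
  have Ap: "AA n r p = ac1" using root_iff[OF p(1)] p(2) by simp
  have Aq: "AA n r q = ac2" using root_iff[OF q(1)] q(2) by simp
  have qp: "q < p"
  proof (rule ccontr)
    assume "\<not> q < p"
    moreover have "q \<noteq> p" using Ap Aq assms(4) by auto
    ultimately have "p < q" by simp
    then have "AA n r q < AA n r p" using AA_lt[OF n1 p(1) _ php phq] by simp
    then show False using Ap Aq assms(4) by simp
  qed
  have cont: "\<And>t. t > 0 \<Longrightarrow> isCont (AA n r) t" using AA_cont n1 by blast
  have "p \<in> {x. x \<ge> 0 \<and> hill_rhs n r x ac1 = 0}" using p by simp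
  then have p_in: "p \<in> {x11, x21}" unfolding eq1 .
  have rq: "r < q"
  proof -
    have "q^n > 0" "1 + q^n > 0" using q(1) by (simp_all add: add_pos_pos)
    moreover have "(q - r) * (1 + q^n) / q^n > 0" using Aq assms(3,4) unfolding AA_def by simp
    ultimately show ?thesis using q(1) by (simp add: zero_less_divide_iff zero_less_mult_iff)
  qed
  have Ar: "AA n r r = 0" unfolding AA_def by simp
  obtain w where w: "r \<le> w" "w \<le> q" "AA n r w = ac1"
  proof -
    have "\<forall>x. r \<le> x \<and> x \<le> q \<longrightarrow> isCont (AA n r) x" using cont assms(1) by auto
    moreover have "AA n r r \<le> ac1" "ac1 \<le> AA n r q" "r \<le> q" using Ar Aq assms(3,4) rq by auto
    ultimately show ?thesis using IVT[of "AA n r" r ac1 q] that by blast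
  qed
  have w0: "w > 0" using w assms(1) by simp
  have "hill_rhs n r w ac1 = 0" using root_iff[OF w0] w by simp
  then have "w \<in> {x. x \<ge> 0 \<and> hill_rhs n r x ac1 = 0}" using w0 by simp
  then have "w \<in> {x11, x21}" unfolding eq1 .
  then have X21: "x21 = p" using p_in w qp assms(8) by auto
  have "q \<in> {x. x \<ge> 0 \<and> hill_rhs n r x ac2 = 0}" using q by simp
  then have q_in: "q \<in> {x12, x22}" unfolding eq2 .
  define t where "t = p + ac2 + r + 1"
  have t0: "t > 0" "p \<le> t" using p(1) assms(1,3,4) unfolding t_def by simp_all
  have At: "ac2 \<le> AA n r t"
  proof -
    have tn: "t^n > 0" using t0 by simp
    have tn0: "t^n \<noteq> 0" by (metis tn less_irrefl)
    have "AA n r t = (t - r) / t^n + (t - r) * t^n / t^n" unfolding AA_def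
      by (simp only: distrib_left mult_1_right add_divide_distrib)
    also have "(t - r) * t^n / t^n = t - r" using tn0 by simp
    finally have "AA n r t = (t - r) + (t - r) / t^n" by simp
    moreover have "(t - r) / t^n \<ge> 0" using tn unfolding t_def using p(1) assms(3,4) by simp
    ultimately show ?thesis unfolding t_def using p(1) by simp
  qed
  obtain v where v: "p \<le> v" "v \<le> t" "AA n r v = ac2"
  proof -
    have "\<forall>x. p \<le> x \<and> x \<le> t \<longrightarrow> isCont (AA n r) x" using cont p(1) by auto
    moreover have "AA n r p \<le> ac2" using Ap assms(4) by simp
    ultimately show ?thesis using IVT[of "AA n r" p ac2 t] that At t0(2) by blast
  qed
  have v0: "v > 0" using v p(1) by simp
  have "hill_rhs n r v ac2 = 0" using root_iff[OF v0] v by simp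
  then have "v \<in> {x. x \<ge> 0 \<and> hill_rhs n r x ac2 = 0}" using v0 by simp
  then have "v \<in> {x12, x22}" unfolding eq2 .
  then have X12: "x12 = q" using q_in v qp assms(11) by auto
  have ne1: "ac1 \<noteq> 4 * real n / (real n ^ 2 - 1) * root n ((real n - 1) / (real n + 1))"
    using assms(12) by simp
  have ne2: "ac2 \<noteq> 4 * real n / (real n ^ 2 - 1) * root n ((real n - 1) / (real n + 1))"
    using assms(13) by simp
  show ?thesis
    using fold_at[OF p(1) assms(2) p(2,3) ne1] fold_at[OF q(1) assms(2) q(2,3) ne2] X21 X12
    by simp
qed

end
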